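(* Let $x\in\mathbb{R}\setminus\mathbb{Q}$. Then $\gamma_R(x)=\tau_R(2x)$, where for an irrational $y$ \[\tau_R(y)=\sup\Big\{\tau : |y-\tfrac{p}{q}|<q^{-\tau} \text{ for infinitely many irreducible rationals } \tfrac{p}{q} \text{ with } p,q \text{ not both odd}\Big\},\] \[\gamma_R(y)=\sup\Big\{\gamma : |y-\tfrac{p}{q}|<q^{-\gamma} \text{ for infinitely many irreducible rationals } \tfrac{p}{q} \text{ with } q\equiv0,1,3 \pmod 4\Big\}.\]
   Context: Irreducible rationals $p/q$ are written with $q\ge1$ and $\gcd(p,q)=1$. *)

theory Defs
  imports "HOL-Analysis.Analysis" "HOL-Library.Extended_Real"
begin

definition good_approx :: "(int \<Rightarrow> int \<Rightarrow> bool) \<Rightarrow> real \<Rightarrow> real \<Rightarrow> (int \<times> int) set" where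
  "good_approx P y t = {(p, q). q \<ge> 1 \<and> coprime p q \<and> P p q \<and>
      \<bar>y - real_of_int p / real_of_int q\<bar> < real_of_int q powr (- t)}"

definition tau_R :: "real \<Rightarrow> ereal" where
  "tau_R y = Sup (ereal ` {t. infinite (good_approx (\<lambda>p q. \<not> (odd p \<and> odd q)) y t)})"

definition gamma_R :: "real \<Rightarrow> ereal" where
  "gamma_R y = Sup (ereal ` {t. infinite (good_approx (\<lambda>p q. q mod 4 \<in> {0, 1, 3}) y t)})"

end

theory Submission
  imports Defs
begin

lemma sup_transfer:
  fixes A B :: "real set"
  assumes "\<And>t t'. t \<in> A \<Longrightarrow> t' < t \<Longrightarrow> t' \<in> B"
  shows "Sup (ereal ` A) \<le> Sup (ereal ` B)"
proof (rule Sup_least)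
  fix z assume "z \<in> ereal ` A"
  then obtain t where t: "t \<in> A" "z = ereal t" by auto
  show "z \<le> Sup (ereal ` B)"
  proof (rule ereal_le_epsilon2)
    fix e :: real assume e: "0 < e"
    have "t - e \<in> B" using assms t e by auto
    then have "ereal (t - e) \<le> Sup (ereal ` B)" by (simp add: SUP_upper)
    then have "ereal (t - e) + ereal e \<le> Sup (ereal ` B) + ereal e"
      by (rule add_right_mono)
    then show "z \<le> Sup (ereal ` B) + ereal e" using t by simp
  qed
qed

lemma finite_small:
  "finite {(p, q) \<in> good_approx P y t. q \<le> N}"
proof -
  let ?S = "\<Union>q\<in>{1..N}. {\<lfloor>q * y - q * q powr (-t)\<rfloor> .. \<lceil>q * y + q * q powr (-t)\<rceil>} \<times> {q}"
  have "{(p, q) \<in> good_approx P y t. q \<le> N} \<subseteq> ?S"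
  proof (clarify)
    fix p q assume m: "(p, q) \<in> good_approx P y t" "q \<le> N"
    then have q1: "q \<ge> 1" and lt: "\<bar>y - real_of_int p / real_of_int q\<bar> < real_of_int q powr (- t)"
      by (auto simp: good_approx_def)
    have qp: "real_of_int q > 0" using q1 by simp
    have e1: "real_of_int q * (y - p / q) = q * y - p" using qp by (simp add: field_simps)
    have "\<bar>q * y - p\<bar> = q * \<bar>y - p / q\<bar>" unfolding e1[symmetric] abs_mult using qp by simp
    also have "\<dots> \<le> q * q powr (-t)" using lt qp by simp
    finally have h: "\<bar>q * y - p\<bar> \<le> q * q powr (-t)" .
    have "p \<ge> \<lfloor>q * y - q * q powr (-t)\<rfloor>" using h by (simp add: floor_le_iff)
    moreover have "p \<le> \<lceil>q * y + q * q powr (-t)\<rceil>" using h by (simp add: le_ceiling_iff)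
    ultimately show "(p, q) \<in> ?S" using q1 m(2) by auto
  qed
  moreover have "finite ?S" by auto
  ultimately show ?thesis by (rule finite_subset)
qed

lemma powr_low:
  fixes q q' a t' :: real
  assumes "q > 0" "q' > 0" "a \<ge> 1" "q' \<le> a * q" "q \<le> a * q'"
  shows "a powr (-\<bar>t'\<bar>) * q powr (-t') \<le> q' powr (-t')"
proof (cases "t' \<ge> 0")
  case True
  have "(a * q) powr (-t') \<le> q' powr (-t')"
    by (rule powr_mono2') (use assms True in auto)
  then show ?thesis using True assms by (simp add: powr_mult)
next
  case False
  have "(q / a) powr (-t') \<le> q' powr (-t')"
    by (rule powr_mono2) (use assms False in \<open>auto simp: field_simps\<close>)
  moreover have "(q / a) powr (-t') = a powr t' * q powr (-t')"
    using assms by (simp add: powr_divide powr_minus inverse_powr field_simps)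
  ultimately show ?thesis using False by simp
qed

lemma powr_key:
  fixes k c t t' q :: real
  assumes k: "k > 0" and c: "c > 0" and tt: "t' < t"
    and q: "q \<ge> max 1 ((k/c) powr (1/(t-t')))"
  shows "k * q powr (-t) \<le> c * q powr (-t')"
proof -
  have q0: "q > 0" using q by simp
  have "(k/c) = ((k/c) powr (1/(t-t'))) powr (t-t')"
    using k c tt by (simp add: powr_powr)
  also have "\<dots> \<le> q powr (t - t')"
    by (rule powr_mono2) (use tt q in auto)
  finally have "k \<le> c * q powr (t - t')" using c by (simp add: field_simps)
  then have "k * q powr (-t) \<le> c * q powr (t - t') * q powr (-t)"
    by (rule mult_right_mono) simp
  also have "\<dots> = c * q powr (-t')" by (simp add: powr_add[symmetric] mult.assoc)
  finally show ?thesis .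
qed

lemma transfer:
  fixes f :: "int \<times> int \<Rightarrow> int \<times> int" and k a t t' y y' :: real
  assumes k: "k > 0" and a: "a \<ge> 1" and tt: "t' < t"
  and inj: "inj_on f {(p,q). q \<ge> 1 \<and> coprime p q \<and> P p q}"
  and mapsto: "\<And>p q. q \<ge> 1 \<Longrightarrow> coprime p q \<Longrightarrow> P p q \<Longrightarrow>
     snd (f (p,q)) \<ge> 1 \<and> coprime (fst (f (p,q))) (snd (f (p,q))) \<and> P' (fst (f (p,q))) (snd (f (p,q)))
     \<and> \<bar>y' - real_of_int (fst (f (p,q))) / real_of_int (snd (f (p,q)))\<bar> \<le> k * \<bar>y - real_of_int p / real_of_int q\<bar>
     \<and> real_of_int (snd (f (p,q))) \<le> a * q \<and> real_of_int q \<le> a * real_of_int (snd (f (p,q)))"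
  and inf: "infinite (good_approx P y t)"
  shows "infinite (good_approx P' y' t')"
proof -
  define c where "c = a powr (-\<bar>t'\<bar>)"
  have c: "c > 0" using a by (simp add: c_def)
  define N where "N = max 1 ((k/c) powr (1/(t-t')))"
  define S where "S = good_approx P y t"
  define S' where "S' = {(p, q) \<in> good_approx P y t. q \<le> \<lceil>N\<rceil>}"
  have "finite S'" unfolding S'_def by (rule finite_small)
  then have inf2: "infinite (S - S')" using inf unfolding S_def
    by (metis Diff_infinite_finite)
  have sub: "S - S' \<subseteq> {(p,q). q \<ge> 1 \<and> coprime p q \<and> P p q}"
    by (auto simp: S_def good_approx_def)
  have injS: "inj_on f (S - S')" using inj sub by (rule inj_on_subset)
  have img: "f ` (S - S') \<subseteq> good_approx P' y' t'"
  proof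
    fix z assume "z \<in> f ` (S - S')"
    then obtain p q where pq: "(p, q) \<in> S" "(p, q) \<notin> S'" "z = f (p, q)" by auto
    have q1: "q \<ge> 1" and cp: "coprime p q" and Pq: "P p q"
      and lt: "\<bar>y - real_of_int p / real_of_int q\<bar> < real_of_int q powr (- t)"
      using pq(1) by (auto simp: S_def good_approx_def)
    have qN: "real_of_int q \<ge> N" using pq(1,2) unfolding S_def S'_def
      by (auto simp: not_le) linarith
    obtain p' q' where z: "z = (p', q')" by (cases z)
    have fz: "f (p, q) = (p', q')" using pq(3) z by simp
    have m: "q' \<ge> 1" "coprime p' q'" "P' p' q'"
      "\<bar>y' - real_of_int p' / real_of_int q'\<bar> \<le> k * \<bar>y - real_of_int p / real_of_int q\<bar>"
      "real_of_int q' \<le> a * q" "real_of_int q \<le> a * real_of_int q'"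
      using mapsto[OF q1 cp Pq] unfolding fz by simp_all
    have "\<bar>y' - real_of_int p' / real_of_int q'\<bar> < k * real_of_int q powr (- t)"
      using m(4) lt k by (smt (verit) mult_strict_left_mono)
    also have "\<dots> \<le> c * real_of_int q powr (-t')"
      by (rule powr_key[OF k c tt]) (use qN in \<open>simp add: N_def\<close>)
    also have "\<dots> \<le> real_of_int q' powr (-t')"
      unfolding c_def by (rule powr_low) (use q1 m a in auto)
    finally show "z \<in> good_approx P' y' t'" using m z by (simp add: good_approx_def)
  qed
  have "infinite (f ` (S - S'))" using inf2 injS finite_imageD by blast
  then show ?thesis using img finite_subset by blast
qed

lemma coprime_not_both_even:
  fixes a b :: int
  assumes "coprime a b"
  shows "\<not> (even a \<and> even b)"
proof
  assume "even a \<and> even b"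
  then have "is_unit (2::int)" using assms coprime_common_divisor by blast
  then show False by simp
qed

definition f1 :: "int \<times> int \<Rightarrow> int \<times> int" where
  "f1 z = (if odd (snd z) then (2 * fst z, snd z) else (fst z, snd z div 2))"

definition f2 :: "int \<times> int \<Rightarrow> int \<times> int" where
  "f2 z = (if even (fst z) then (fst z div 2, snd z) else (fst z, 2 * snd z))"

lemma gamma_to_tau:
  fixes x t t' :: real
  assumes "t' < t" "infinite (good_approx (\<lambda>p q. q mod 4 \<in> {0, 1, 3}) x t)"
  shows "infinite (good_approx (\<lambda>p q. \<not> (odd p \<and> odd q)) (2 * x) t')"
proof (rule transfer[where f = f1 and k = 2 and a = 2, OF _ _ assms(1) _ _ assms(2)])
  show "inj_on f1 {(p, q). 1 \<le> q \<and> coprime p q \<and> q mod 4 \<in> {0, 1, 3}}"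
  proof (rule inj_onI, clarify)
    fix p1 q1 p2 q2 :: int
    assume a1: "q1 mod 4 \<in> {0, 1, 3}" and a2: "q2 mod 4 \<in> {0, 1, 3}" and e: "f1 (p1, q1) = f1 (p2, q2)"
    have A1: "q1 mod 4 = 0 \<or> q1 mod 4 = 1 \<or> q1 mod 4 = 3" using a1 by auto
    have A2: "q2 mod 4 = 0 \<or> q2 mod 4 = 1 \<or> q2 mod 4 = 3" using a2 by auto
    show "p1 = p2 \<and> q1 = q2"
    proof (cases "odd q1"; cases "odd q2")
      assume "odd q1" "odd q2" then show ?thesis using e by (simp add: f1_def)
    next
      assume o: "odd q1" "\<not> odd q2"
      then have "q1 = q2 div 2" using e by (simp add: f1_def)
      then show ?thesis using o A2 by presburger
    next
      assume o: "\<not> odd q1" "odd q2"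
      then have "q2 = q1 div 2" using e by (simp add: f1_def)
      then show ?thesis using o A1 by presburger
    next
      assume o: "\<not> odd q1" "\<not> odd q2"
      then have "p1 = p2" "q1 div 2 = q2 div 2" using e by (simp_all add: f1_def)
      then show ?thesis using o by presburger
    qed
  qed
next
  fix p q :: int
  assume q1: "1 \<le> q" and cp: "coprime p q" and P: "q mod 4 \<in> {0, 1, 3}"
  have qp: "real_of_int q > 0" using q1 by simp
  show "1 \<le> snd (f1 (p, q)) \<and> coprime (fst (f1 (p, q))) (snd (f1 (p, q))) \<and>
       \<not> (odd (fst (f1 (p, q))) \<and> odd (snd (f1 (p, q)))) \<and>
       \<bar>2 * x - real_of_int (fst (f1 (p, q))) / real_of_int (snd (f1 (p, q)))\<bar> \<le> 2 * \<bar>x - real_of_int p / real_of_int q\<bar> \<and>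
       real_of_int (snd (f1 (p, q))) \<le> 2 * real_of_int q \<and> real_of_int q \<le> 2 * real_of_int (snd (f1 (p, q)))"
  proof (cases "odd q")
    case True
    have "coprime (2 * p) q" using cp True by (simp add: coprime_mult_left_iff)
    moreover have ee: "2 * x - real_of_int (2 * p) / real_of_int q = 2 * (x - real_of_int p / real_of_int q)"
      by (simp add: field_simps)
    then have "\<bar>2 * x - real_of_int (2 * p) / real_of_int q\<bar> = 2 * \<bar>x - real_of_int p / real_of_int q\<bar>"
      unfolding ee abs_mult by simp
    ultimately show ?thesis using True q1 by (simp add: f1_def abs_mult)
  next
    case False
    have "q mod 4 = 0 \<or> q mod 4 = 1 \<or> q mod 4 = 3" using P by auto
    then have q4: "q mod 4 = 0" using False by presburger
    define m where "m = q div 2"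
    have qm: "q = 2 * m" using False m_def by simp
    have m1: "m \<ge> 1" using q1 q4 qm by presburger
    have em: "even m" using q4 qm by presburger
    have "coprime p m" using cp qm by (simp add: coprime_mult_right_iff)
    moreover have ee: "2 * x - real_of_int p / real_of_int m = 2 * (x - real_of_int p / real_of_int q)"
      using m1 by (simp add: qm field_simps)
    then have "\<bar>2 * x - real_of_int p / real_of_int m\<bar> = 2 * \<bar>x - real_of_int p / real_of_int q\<bar>"
      unfolding ee abs_mult by simp
    ultimately show ?thesis using False q1 m1 em qm by (simp add: f1_def m_def[symmetric])
  qed
qed auto

lemma tau_to_gamma:
  fixes x t t' :: real
  assumes "t' < t" "infinite (good_approx (\<lambda>p q. \<not> (odd p \<and> odd q)) (2 * x) t)"
  shows "infinite (good_approx (\<lambda>p q. q mod 4 \<in> {0, 1, 3}) x t')"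
proof (rule transfer[where f = f2 and k = "1/2" and a = 2, OF _ _ assms(1) _ _ assms(2)])
  show "inj_on f2 {(p, q). 1 \<le> q \<and> coprime p q \<and> \<not> (odd p \<and> odd q)}"
  proof (rule inj_onI, clarify)
    fix p1 q1 p2 q2 :: int
    assume c1: "coprime p1 q1" and c2: "coprime p2 q2" and e: "f2 (p1, q1) = f2 (p2, q2)"
    have "\<not> (even p1 \<and> even q1)" "\<not> (even p2 \<and> even q2)"
      using c1 c2 coprime_not_both_even by blast+
    then show "p1 = p2 \<and> q1 = q2"
      using e unfolding f2_def by (auto split: if_splits; presburger)
  qed
next
  fix p q :: int
  assume q1: "1 \<le> q" and cp: "coprime p q" and P: "\<not> (odd p \<and> odd q)"
  have qp: "real_of_int q > 0" using q1 by simp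
  show "1 \<le> snd (f2 (p, q)) \<and> coprime (fst (f2 (p, q))) (snd (f2 (p, q))) \<and>
       snd (f2 (p, q)) mod 4 \<in> {0, 1, 3} \<and>
       \<bar>x - real_of_int (fst (f2 (p, q))) / real_of_int (snd (f2 (p, q)))\<bar> \<le> 1/2 * \<bar>2 * x - real_of_int p / real_of_int q\<bar> \<and>
       real_of_int (snd (f2 (p, q))) \<le> 2 * real_of_int q \<and> real_of_int q \<le> 2 * real_of_int (snd (f2 (p, q)))"
  proof (cases "even p")
    case True
    define m where "m = p div 2"
    have pm: "p = 2 * m" using True m_def by simp
    have oq: "odd q" using True cp coprime_not_both_even by blast
    have "q mod 4 = 1 \<or> q mod 4 = 3" using oq by presburger
    then have q4: "q mod 4 \<in> {0, 1, 3}" by auto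
    have "coprime m q" using cp pm by (simp add: coprime_mult_left_iff)
    moreover have ee: "x - real_of_int m / real_of_int q = 1/2 * (2 * x - real_of_int p / real_of_int q)"
      using qp by (simp add: pm field_simps)
    then have "\<bar>x - real_of_int m / real_of_int q\<bar> = 1/2 * \<bar>2 * x - real_of_int p / real_of_int q\<bar>"
      unfolding ee abs_mult by simp
    ultimately show ?thesis using True q1 q4 by (simp add: f2_def abs_mult m_def[symmetric])
  next
    case False
    then have eq: "even q" using P by blast
    have q4: "(2 * q) mod 4 = 0" using eq by presburger
    have "coprime p (2 * q)" using cp False by (simp add: coprime_mult_right_iff)
    moreover have ee: "x - real_of_int p / real_of_int (2 * q) = 1/2 * (2 * x - real_of_int p / real_of_int q)"
      using qp by (simp add: field_simps)
    then have "\<bar>x - real_of_int p / real_of_int (2 * q)\<bar> = 1/2 * \<bar>2 * x - real_of_int p / real_of_int q\<bar>"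
      unfolding ee abs_mult by simp
    ultimately show ?thesis using False q1 q4 by (simp add: f2_def abs_mult)
  qed
qed auto

theorem lemma3p3:
  fixes x :: real
  assumes "x \<notin> \<rat>"
  shows "gamma_R x = tau_R (2 * x)"
  unfolding gamma_R_def tau_R_def
proof (rule antisym)
  show "Sup (ereal ` {t. infinite (good_approx (\<lambda>p q. q mod 4 \<in> {0, 1, 3}) x t)})
    \<le> Sup (ereal ` {t. infinite (good_approx (\<lambda>p q. \<not> (odd p \<and> odd q)) (2 * x) t)})"
    by (rule sup_transfer) (metis gamma_to_tau mem_Collect_eq)
  show "Sup (ereal ` {t. infinite (good_approx (\<lambda>p q. \<not> (odd p \<and> odd q)) (2 * x) t)})
    \<le> Sup (ereal ` {t. infinite (good_approx (\<lambda>p q. q mod 4 \<in> {0, 1, 3}) x t)})"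
    by (rule sup_transfer) (metis tau_to_gamma mem_Collect_eq)
qed

end
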